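(* Let $K\ge2$, let $\mathbf{p}$ be a probability vector on $[K]$ with all $p_k>0$, let $\mathbf{W}$ be a $K\times K$ invertible row-stochastic matrix, and let $\hat{\mathbf{p}}_n=\mathrm{Proj}_{\mathbb{P}}(\check{\mathbf{p}}_n)$ be an estimator as described in the context. Then $$\mathbb{E}\big[\Vert\hat{\mathbf{p}}_n-\mathbf{p}\Vert_1\big]=\sqrt{\frac{2}{\pi n}}\sum_{k=1}^K\sqrt{\nu_{2,k}-\nu_{1,k}^2}+o\Big(\frac1{\sqrt n}\Big)\quad(n\to\infty).$$
   Context: Setting: $X_1,\dots,X_n$ i.i.d. with law $\mathbf{p}$; each $X_i$ passed independently through $\mathbf{W}$ ($\Pr\{Y_i=\ell\mid X_i=k\}=W_{k,\ell}$), giving $\mathbf{y}_n$. $\mathbf{t}(\mathbf{y}_n)$ is the empirical distribution of $\mathbf{y}_n$, $\check{\mathbf{p}}_n=\mathbf{t}(\mathbf{y}_n)\mathbf{W}^{-1}$, $\mathbb{P}$ is the probability simplex, and $\mathrm{Proj}_{\mathbb{P}}$ is any fixed map from vectors with entries summing to one into $\mathbb{P}$ with $\mathrm{Proj}_{\mathbb{P}}(\mathbf{v})=\mathbf{v}$ for $\mathbf{v}\in\mathbb{P}$. $\nu_{\rho,k}=\mathbf{p}\mathbf{W}(\mathbf{W}^{-1}\odot\cdots\odot\mathbf{W}^{-1})\mathbf{e}_k^\top$ ($\rho$ Hadamard factors); $\nu_{1,k}=p_k$. *)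

theory Defs
  imports "HOL-Analysis.Analysis" "HOL-Library.Landau_Symbols"
begin

definition prob_simplex :: "(real ^ 'k::finite) set" where
  "prob_simplex = {v. (\<forall>k. v $ k \<ge> 0) \<and> (\<Sum>k\<in>UNIV. v $ k) = 1}"

definition row_stochastic :: "real ^ 'k ^ 'k::finite \<Rightarrow> bool" where
  "row_stochastic W \<longleftrightarrow> (\<forall>k l. W $ k $ l \<ge> 0) \<and> (\<forall>k. (\<Sum>l\<in>UNIV. W $ k $ l) = 1)"

definition emp_dist :: "nat \<Rightarrow> (nat \<Rightarrow> 'k::finite) \<Rightarrow> real ^ 'k" where
  "emp_dist n ys = (\<chi> l. real (card {i. i < n \<and> ys i = l}) / real n)"

definition hadamard_pow :: "nat \<Rightarrow> real ^ 'k ^ 'k::finite \<Rightarrow> real ^ 'k ^ 'k" where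
  "hadamard_pow rho M = (\<chi> i j. (M $ i $ j) ^ rho)"

definition nu :: "real ^ 'k::finite \<Rightarrow> real ^ 'k ^ 'k \<Rightarrow> nat \<Rightarrow> 'k \<Rightarrow> real" where
  "nu p W rho k = ((p v* W) v* hadamard_pow rho (matrix_inv W)) $ k"

definition l1_dist :: "real ^ 'k::finite \<Rightarrow> real ^ 'k \<Rightarrow> real" where
  "l1_dist u v = (\<Sum>k\<in>UNIV. \<bar>u $ k - v $ k\<bar>)"

text \<open>Expected L1 error of the estimator Proj(t(y_n) W^{-1}), computed exactly
  over the joint law of (X_1..X_n, Y_1..Y_n).\<close>
definition expected_l1_error ::
  "real ^ 'k::finite \<Rightarrow> real ^ 'k ^ 'k \<Rightarrow> (real ^ 'k \<Rightarrow> real ^ 'k) \<Rightarrow> nat \<Rightarrow> real" where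
  "expected_l1_error p W Proj n =
     (\<Sum>xs\<in>PiE {..<n} (\<lambda>_. UNIV). \<Sum>ys\<in>PiE {..<n} (\<lambda>_. UNIV).
        (\<Prod>i<n. p $ (xs i) * W $ (xs i) $ (ys i)) *
        l1_dist (Proj (emp_dist n ys v* matrix_inv W)) p)"

end

theory Submission
  imports Defs "HOL-Probability.Probability"
begin

lemma conv_integral:
  fixes Q :: "'k::finite pmf" and g :: "(nat \<Rightarrow> 'k) \<Rightarrow> real" and I :: "nat set"
  assumes fin: "finite I"
  shows "integrable (PiM UNIV (\<lambda>_::nat. measure_pmf Q)) (\<lambda>\<omega>. g (restrict \<omega> I))"
    and "(\<integral>\<omega>. g (restrict \<omega> I) \<partial>(PiM UNIV (\<lambda>_::nat. measure_pmf Q))) =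
         (\<Sum>ys\<in>PiE I (\<lambda>_. UNIV). (\<Prod>i\<in>I. pmf Q (ys i)) * g ys)"
proof -
  let ?M = "PiM UNIV (\<lambda>_::nat. measure_pmf Q)"
  interpret P: product_prob_space "\<lambda>_::nat. measure_pmf Q" UNIV
    by (rule product_prob_spaceI) (simp add: measure_pmf.prob_space_axioms)
  define A where "A ys = prod_emb UNIV (\<lambda>_::nat. measure_pmf Q) I (PiE I (\<lambda>i. {ys i}))" for ys :: "nat \<Rightarrow> 'k"
  have Aset: "A ys \<in> sets ?M" for ys
    unfolding A_def using fin by (intro measurable_prod_emb sets_PiM_I_finite) auto
  have Ameas: "measure ?M (A ys) = (\<Prod>i\<in>I. pmf Q (ys i))" for ys
    unfolding A_def using fin by (subst P.measure_PiM_emb) (auto simp: measure_pmf_single)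
  have Aind: "indicator (A ys) \<omega> = (if ys = restrict \<omega> I then 1 else (0::real))"
    if "ys \<in> PiE I (\<lambda>_. UNIV)" for ys \<omega>
    using that unfolding A_def prod_emb_def
    by (auto simp: space_PiM PiE_iff restrict_def fun_eq_iff extensional_def split: split_indicator)
  have eq: "g (restrict \<omega> I) = (\<Sum>ys\<in>PiE I (\<lambda>_. UNIV). g ys * indicator (A ys) \<omega>)" for \<omega>
  proof -
    have "(\<Sum>ys\<in>PiE I (\<lambda>_. UNIV). g ys * indicator (A ys) \<omega>) =
          (\<Sum>ys\<in>PiE I (\<lambda>_. UNIV). if ys = restrict \<omega> I then g ys else 0)"
      by (intro sum.cong refl) (simp add: Aind)
    also have "\<dots> = g (restrict \<omega> I)"
      using fin by (subst sum.delta) (auto simp: finite_PiE)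
    finally show ?thesis by simp
  qed
  have int: "integrable ?M (\<lambda>\<omega>. (\<Sum>ys\<in>PiE I (\<lambda>_. UNIV). g ys * indicator (A ys) \<omega>))"
    by (intro Bochner_Integration.integrable_sum integrable_mult_right integrable_real_indicator Aset) (simp add: less_top[symmetric])
  then show "integrable ?M (\<lambda>\<omega>. g (restrict \<omega> I))"
    by (subst eq) 
  have "(\<integral>\<omega>. g (restrict \<omega> I) \<partial>?M) = (\<integral>\<omega>. (\<Sum>ys\<in>PiE I (\<lambda>_. UNIV). g ys * indicator (A ys) \<omega>) \<partial>?M)"
    by (subst eq) rule
  also have "\<dots> = (\<Sum>ys\<in>PiE I (\<lambda>_. UNIV). g ys * measure ?M (A ys))"
    by (subst Bochner_Integration.integral_sum) (auto intro!: integrable_mult_right integrable_real_indicator Aset simp: less_top[symmetric] Aset)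
  also have "\<dots> = (\<Sum>ys\<in>PiE I (\<lambda>_. UNIV). (\<Prod>i\<in>I. pmf Q (ys i)) * g ys)"
    by (simp add: Ameas mult.commute)
  finally show "(\<integral>\<omega>. g (restrict \<omega> I) \<partial>?M) = (\<Sum>ys\<in>PiE I (\<lambda>_. UNIV). (\<Prod>i\<in>I. pmf Q (ys i)) * g ys)" .
qed

lemma abs_le_1_sq: "\<bar>x::real\<bar> \<le> 1 + x\<^sup>2"
proof -
  have "0 \<le> (\<bar>x\<bar> - 1/2)\<^sup>2" by simp
  then show ?thesis by (simp add: power2_eq_square algebra_simps)
qed

lemma rd_integrable_abs:
  assumes "real_distribution M" "integrable M (\<lambda>x. x\<^sup>2)"
  shows "integrable M (\<lambda>x::real. \<bar>x\<bar>)"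
proof -
  interpret real_distribution M by fact
  have "integrable M (\<lambda>x. 1 + x\<^sup>2)" using assms(2) by simp
  then show ?thesis
    by (rule Bochner_Integration.integrable_bound) (auto simp: abs_le_1_sq)
qed

lemma rd_tail:
  assumes "real_distribution M" "integrable M (\<lambda>x. x\<^sup>2)" "T > 0"
  shows "0 \<le> (\<integral>x. \<bar>x::real\<bar> \<partial>M) - (\<integral>x. min \<bar>x\<bar> T \<partial>M)"
    and "(\<integral>x. \<bar>x::real\<bar> \<partial>M) - (\<integral>x. min \<bar>x\<bar> T \<partial>M) \<le> (\<integral>x. x\<^sup>2 \<partial>M) / T"
proof -
  interpret real_distribution M by fact
  have ia: "integrable M (\<lambda>x::real. \<bar>x\<bar>)" by (rule rd_integrable_abs[OF assms(1,2)])
  have im: "integrable M (\<lambda>x::real. min \<bar>x\<bar> T)"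
    by (rule Bochner_Integration.integrable_bound[OF ia]) (use assms(3) in auto)
  have eq: "(\<integral>x. \<bar>x::real\<bar> \<partial>M) - (\<integral>x. min \<bar>x\<bar> T \<partial>M) = (\<integral>x. \<bar>x\<bar> - min \<bar>x\<bar> T \<partial>M)"
    using ia im by simp
  show "0 \<le> (\<integral>x. \<bar>x::real\<bar> \<partial>M) - (\<integral>x. min \<bar>x\<bar> T \<partial>M)"
    unfolding eq by (rule integral_nonneg_AE) auto
  have pw: "\<bar>x\<bar> - min \<bar>x\<bar> T \<le> x\<^sup>2 / T" for x :: real
  proof (cases "\<bar>x\<bar> \<le> T")
    case True then show ?thesis using assms(3) by simp
  next
    case False
    then have "\<bar>x\<bar> * T \<le> \<bar>x\<bar> * \<bar>x\<bar>" using assms(3) by (intro mult_left_mono) auto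
    then have "\<bar>x\<bar> \<le> x\<^sup>2 / T" using assms(3) by (simp add: field_simps power2_eq_square)
    then show ?thesis using False assms(3) by simp
  qed
  have "(\<integral>x. \<bar>x\<bar> - min \<bar>x\<bar> T \<partial>M) \<le> (\<integral>x. x\<^sup>2 / T \<partial>M)"
    using ia im assms(2) by (intro integral_mono) (auto simp: pw)
  also have "\<dots> = (\<integral>x. x\<^sup>2 \<partial>M) / T" by simp
  finally show "(\<integral>x. \<bar>x::real\<bar> \<partial>M) - (\<integral>x. min \<bar>x\<bar> T \<partial>M) \<le> (\<integral>x. x\<^sup>2 \<partial>M) / T"
    unfolding eq .
qed

lemma std_normal_abs_moment:
  "(\<integral>x. \<bar>x\<bar> \<partial>std_normal_distribution) = sqrt (2 / pi)"
proof -
  have "(\<integral>x. \<bar>x\<bar> \<partial>std_normal_distribution) = (\<integral>x. std_normal_density x * \<bar>x\<bar> ^ (2 * 0 + 1) \<partial>lborel)"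
    by (subst integral_density) (auto simp: normal_density_nonneg)
  also have "\<dots> = sqrt (2 / pi)"
    by (subst integral_std_normal_moment_abs_odd) simp
  finally show ?thesis .
qed

lemma std_normal_sq:
  "integrable std_normal_distribution (\<lambda>x. x\<^sup>2)" "(\<integral>x. x\<^sup>2 \<partial>std_normal_distribution) = 1"
  using std_normal_distribution_even_moments[of 1] by (simp_all add: numeral_2_eq_2)

lemma weak_conv_abs_moment:
  fixes \<mu> :: "nat \<Rightarrow> real measure"
  assumes \<mu>: "\<And>n. real_distribution (\<mu> n)"
    and wc: "weak_conv_m \<mu> std_normal_distribution"
    and int2: "\<And>n. integrable (\<mu> n) (\<lambda>x. x\<^sup>2)"
    and bnd2: "\<And>n. (\<integral>x. x\<^sup>2 \<partial>\<mu> n) \<le> 1"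
  shows "(\<lambda>n. \<integral>x. \<bar>x\<bar> \<partial>\<mu> n) \<longlonglongrightarrow> sqrt (2 / pi)"
proof (rule LIMSEQ_I)
  fix r :: real assume r: "0 < r"
  define T where "T = 3 / r"
  have T: "T > 0" using r by (simp add: T_def)
  let ?N = std_normal_distribution
  have N: "real_distribution ?N" by (rule real_dist_normal_dist)
  have conv: "(\<lambda>n. \<integral>x. min \<bar>x\<bar> T \<partial>\<mu> n) \<longlonglongrightarrow> (\<integral>x. min \<bar>x\<bar> T \<partial>?N)"
    by (rule weak_conv_imp_integral_bdd_continuous_conv[OF \<mu> N wc, where B = T])
       (use T in \<open>auto intro!: continuous_intros\<close>)
  from LIMSEQ_D[OF conv, of "r / 3"] r obtain n0 where
    n0: "\<And>n. n \<ge> n0 \<Longrightarrow> norm ((\<integral>x. min \<bar>x\<bar> T \<partial>\<mu> n) - (\<integral>x. min \<bar>x\<bar> T \<partial>?N)) < r / 3"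
    by auto
  show "\<exists>no. \<forall>n\<ge>no. norm ((\<integral>x. \<bar>x\<bar> \<partial>\<mu> n) - sqrt (2 / pi)) < r"
  proof (intro exI allI impI)
    fix n assume "n \<ge> n0"
    note a = n0[OF this]
    note t1 = rd_tail[OF \<mu> int2 T, of n]
    note t2 = rd_tail[OF N std_normal_sq(1) T]
    have "(\<integral>x. x\<^sup>2 \<partial>\<mu> n) / T \<le> 1 / T" using bnd2[of n] T by (simp add: divide_right_mono)
    moreover have "1 / T = r / 3" using r by (simp add: T_def)
    ultimately have b1: "(\<integral>x. \<bar>x\<bar> \<partial>\<mu> n) - (\<integral>x. min \<bar>x\<bar> T \<partial>\<mu> n) \<le> r / 3"
      using t1(2) by linarith
    have b2: "sqrt (2 / pi) - (\<integral>x. min \<bar>x\<bar> T \<partial>?N) \<le> r / 3"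
      using t2(2) \<open>1 / T = r / 3\<close> by (simp add: std_normal_abs_moment std_normal_sq(2))
    have b3: "0 \<le> sqrt (2 / pi) - (\<integral>x. min \<bar>x\<bar> T \<partial>?N)"
      using t2(1) by (simp add: std_normal_abs_moment)
    have b4: "(\<integral>x. min \<bar>x\<bar> T \<partial>\<mu> n) - (\<integral>x. min \<bar>x\<bar> T \<partial>?N) < r / 3"
         "(\<integral>x. min \<bar>x\<bar> T \<partial>?N) - (\<integral>x. min \<bar>x\<bar> T \<partial>\<mu> n) < r / 3"
      using a unfolding real_norm_def abs_less_iff by linarith+
    show "norm ((\<integral>x. \<bar>x\<bar> \<partial>\<mu> n) - sqrt (2 / pi)) < r"
      unfolding real_norm_def abs_less_iff using b1 b2 b3 b4 t1(1) by linarith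
  qed
qed

lemma prod_expect:
  fixes Q :: "'k::finite pmf" and f :: "nat \<Rightarrow> 'k \<Rightarrow> real" and I :: "nat set"
  assumes fin: "finite I"
  shows "integrable (PiM UNIV (\<lambda>_::nat. measure_pmf Q)) (\<lambda>\<omega>. \<Prod>m\<in>I. f m (\<omega> m))"
    and "(\<integral>\<omega>. (\<Prod>m\<in>I. f m (\<omega> m)) \<partial>(PiM UNIV (\<lambda>_::nat. measure_pmf Q))) =
         (\<Prod>m\<in>I. \<Sum>a\<in>UNIV. pmf Q a * f m a)"
proof -
  have eq: "(\<lambda>\<omega>. (\<lambda>ys. \<Prod>m\<in>I. f m (ys m)) (restrict \<omega> I)) = (\<lambda>\<omega>::nat \<Rightarrow> 'k. \<Prod>m\<in>I. f m (\<omega> m))"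
    by (auto intro!: prod.cong ext)
  show "integrable (PiM UNIV (\<lambda>_::nat. measure_pmf Q)) (\<lambda>\<omega>. \<Prod>m\<in>I. f m (\<omega> m))"
    using conv_integral(1)[OF fin, where Q=Q and g="\<lambda>ys. \<Prod>m\<in>I. f m (ys m)"] unfolding eq .
  have "(\<integral>\<omega>. (\<Prod>m\<in>I. f m (\<omega> m)) \<partial>(PiM UNIV (\<lambda>_::nat. measure_pmf Q))) =
      (\<Sum>ys\<in>PiE I (\<lambda>_. UNIV). (\<Prod>i\<in>I. pmf Q (ys i)) * (\<Prod>m\<in>I. f m (ys m)))"
    using conv_integral(2)[OF fin, where Q=Q and g="\<lambda>ys. \<Prod>m\<in>I. f m (ys m)"] unfolding eq .
  also have "\<dots> = (\<Sum>ys\<in>PiE I (\<lambda>_. UNIV). \<Prod>m\<in>I. pmf Q (ys m) * f m (ys m))"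
    by (simp add: prod.distrib)
  also have "\<dots> = (\<Prod>m\<in>I. \<Sum>a\<in>UNIV. pmf Q a * f m a)"
    using fin by (subst prod_sum_PiE) auto
  finally show "(\<integral>\<omega>. (\<Prod>m\<in>I. f m (\<omega> m)) \<partial>(PiM UNIV (\<lambda>_::nat. measure_pmf Q))) =
         (\<Prod>m\<in>I. \<Sum>a\<in>UNIV. pmf Q a * f m a)" .
qed

lemma single_expect:
  fixes Q :: "'k::finite pmf" and f :: "'k \<Rightarrow> real"
  shows "integrable (PiM UNIV (\<lambda>_::nat. measure_pmf Q)) (\<lambda>\<omega>. f (\<omega> i))"
    and "(\<integral>\<omega>. f (\<omega> i) \<partial>(PiM UNIV (\<lambda>_::nat. measure_pmf Q))) = (\<Sum>a\<in>UNIV. pmf Q a * f a)"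
  using prod_expect[of "{i}" Q "\<lambda>_. f"] by simp_all

lemma pair_expect:
  fixes Q :: "'k::finite pmf" and z :: "'k \<Rightarrow> real"
  assumes "i \<noteq> j"
  shows "integrable (PiM UNIV (\<lambda>_::nat. measure_pmf Q)) (\<lambda>\<omega>. z (\<omega> i) * z (\<omega> j))"
    and "(\<integral>\<omega>. z (\<omega> i) * z (\<omega> j) \<partial>(PiM UNIV (\<lambda>_::nat. measure_pmf Q))) = (\<Sum>a\<in>UNIV. pmf Q a * z a)\<^sup>2"
  using prod_expect[of "{i,j}" Q "\<lambda>_. z"] assms by (simp_all add: power2_eq_square)

lemma second_moment:
  fixes Q :: "'k::finite pmf" and z :: "'k \<Rightarrow> real"
  assumes mean0: "(\<Sum>a\<in>UNIV. pmf Q a * z a) = 0"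
  shows "integrable (PiM UNIV (\<lambda>_::nat. measure_pmf Q)) (\<lambda>\<omega>. (\<Sum>i<n. z (\<omega> i))\<^sup>2)"
    and "(\<integral>\<omega>. (\<Sum>i<n. z (\<omega> i))\<^sup>2 \<partial>(PiM UNIV (\<lambda>_::nat. measure_pmf Q))) =
           real n * (\<Sum>a\<in>UNIV. pmf Q a * (z a)\<^sup>2)"
proof -
  let ?M = "PiM UNIV (\<lambda>_::nat. measure_pmf Q)"
  have int: "integrable ?M (\<lambda>\<omega>. z (\<omega> i) * z (\<omega> j))" for i j
  proof (cases "i = j")
    case True
    then show ?thesis using single_expect(1)[where Q=Q and f="\<lambda>a. z a * z a" and i=i] by simp
  next
    case False then show ?thesis by (rule pair_expect(1))
  qed
  have ex: "(\<integral>\<omega>. z (\<omega> i) * z (\<omega> j) \<partial>?M) = (if i = j then (\<Sum>a\<in>UNIV. pmf Q a * (z a)\<^sup>2) else 0)" for i j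
  proof (cases "i = j")
    case True
    then show ?thesis using single_expect(2)[where Q=Q and f="\<lambda>a. z a * z a" and i=i] by (simp add: power2_eq_square)
  next
    case False then show ?thesis using pair_expect(2)[OF False, where z=z and Q=Q] mean0 by simp
  qed
  have sq: "(\<Sum>i<n. z (\<omega> i))\<^sup>2 = (\<Sum>i<n. \<Sum>j<n. z (\<omega> i) * z (\<omega> j))" for \<omega> :: "nat \<Rightarrow> 'k"
    by (simp add: power2_eq_square sum_product)
  show "integrable ?M (\<lambda>\<omega>. (\<Sum>i<n. z (\<omega> i))\<^sup>2)"
    unfolding sq by (intro Bochner_Integration.integrable_sum int)
  have "(\<integral>\<omega>. (\<Sum>i<n. z (\<omega> i))\<^sup>2 \<partial>?M) = (\<Sum>i<n. (\<integral>\<omega>. (\<Sum>j<n. z (\<omega> i) * z (\<omega> j)) \<partial>?M))"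
    unfolding sq by (rule Bochner_Integration.integral_sum) (intro Bochner_Integration.integrable_sum int)
  also have "\<dots> = (\<Sum>i<n. \<Sum>j<n. (\<integral>\<omega>. z (\<omega> i) * z (\<omega> j) \<partial>?M))"
    by (intro sum.cong refl Bochner_Integration.integral_sum int)
  also have "\<dots> = real n * (\<Sum>a\<in>UNIV. pmf Q a * (z a)\<^sup>2)"
    by (simp add: ex)
  finally show "(\<integral>\<omega>. (\<Sum>i<n. z (\<omega> i))\<^sup>2 \<partial>?M) = real n * (\<Sum>a\<in>UNIV. pmf Q a * (z a)\<^sup>2)" .
qed

lemma coord_indep:
  fixes Q :: "'k::finite pmf"
  shows "prob_space.indep_vars (PiM UNIV (\<lambda>_::nat. measure_pmf Q)) (\<lambda>_. measure_pmf Q) (\<lambda>i \<omega>. \<omega> i) UNIV"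
proof -
  interpret P: product_prob_space "\<lambda>_::nat. measure_pmf Q" UNIV
    by (rule product_prob_spaceI) (simp add: measure_pmf.prob_space_axioms)
  have rv: "(\<lambda>\<omega>. \<omega> i) \<in> measurable (PiM UNIV (\<lambda>_::nat. measure_pmf Q)) (measure_pmf Q)" for i
    by (rule measurable_component_singleton) simp
  have id: "(\<lambda>x::nat \<Rightarrow> 'k. \<lambda>i\<in>UNIV. x i) = (\<lambda>x. x)" by (simp add: restrict_def)
  have eq: "distr (PiM UNIV (\<lambda>_::nat. measure_pmf Q)) (PiM UNIV (\<lambda>_::nat. measure_pmf Q)) (\<lambda>x. \<lambda>i\<in>UNIV. x i) =
          (\<Pi>\<^sub>M i\<in>UNIV. distr (PiM UNIV (\<lambda>_::nat. measure_pmf Q)) (measure_pmf Q) (\<lambda>\<omega>. \<omega> i))"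
  proof -
    have c: "distr (PiM UNIV (\<lambda>_::nat. measure_pmf Q)) (measure_pmf Q) (\<lambda>\<omega>. \<omega> i) = measure_pmf Q" for i
      by (rule P.PiM_component) simp
    show ?thesis unfolding id distr_id c by (rule refl)
  qed
  show ?thesis
    using iffD2[OF P.indep_vars_iff_distr_eq_PiM[OF UNIV_not_empty rv] eq] .
qed

lemma abs_sum_expect:
  fixes Q :: "'k::finite pmf" and z :: "'k \<Rightarrow> real"
  shows "(\<integral>\<omega>. \<bar>\<Sum>i<n. z (\<omega> i)\<bar> \<partial>(PiM UNIV (\<lambda>_::nat. measure_pmf Q))) =
     (\<Sum>ys\<in>PiE {..<n} (\<lambda>_. UNIV). (\<Prod>i<n. pmf Q (ys i)) * \<bar>\<Sum>i<n. z (ys i)\<bar>)"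
proof -
  have eq: "(\<lambda>\<omega>. (\<lambda>ys. \<bar>\<Sum>i<n. z (ys i)\<bar>) (restrict \<omega> {..<n})) = (\<lambda>\<omega>::nat \<Rightarrow> 'k. \<bar>\<Sum>i<n. z (\<omega> i)\<bar>)"
    by (auto intro!: sum.cong ext)
  show ?thesis
    using conv_integral(2)[OF finite_lessThan[of n], where Q=Q and g="\<lambda>ys. \<bar>\<Sum>i<n. z (ys i)\<bar>"] unfolding eq .
qed

lemma clt_abs:
  fixes Q :: "'k::finite pmf" and z :: "'k \<Rightarrow> real"
  assumes mean0: "(\<Sum>a\<in>UNIV. pmf Q a * z a) = 0"
  shows "(\<lambda>n. (\<integral>\<omega>. \<bar>\<Sum>i<n. z (\<omega> i)\<bar> \<partial>(PiM UNIV (\<lambda>_::nat. measure_pmf Q))) / sqrt (real n))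
           \<longlonglongrightarrow> sqrt (2 / pi) * sqrt (\<Sum>a\<in>UNIV. pmf Q a * (z a)\<^sup>2)"
proof -
  let ?M = "PiM UNIV (\<lambda>_::nat. measure_pmf Q)"
  interpret P: product_prob_space "\<lambda>_::nat. measure_pmf Q" UNIV
    by (rule product_prob_spaceI) (simp add: measure_pmf.prob_space_axioms)
  define s2 where "s2 = (\<Sum>a\<in>UNIV. pmf Q a * (z a)\<^sup>2)"
  have s2_nn: "s2 \<ge> 0" unfolding s2_def by (intro sum_nonneg) auto
  show ?thesis
  proof (cases "s2 = 0")
    case True
    have zq: "z a = 0" if "pmf Q a \<noteq> 0" for a
    proof -
      have "\<forall>a\<in>UNIV. pmf Q a * (z a)\<^sup>2 = 0"
        using True unfolding s2_def by (subst sum_nonneg_eq_0_iff[symmetric]) auto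
      then show ?thesis using that by auto
    qed
    have zero: "(\<integral>\<omega>. \<bar>\<Sum>i<n. z (\<omega> i)\<bar> \<partial>?M) = 0" for n
    proof -
      have term0: "(\<Prod>i<n. pmf Q (ys i)) * \<bar>\<Sum>i<n. z (ys i)\<bar> = 0" for ys :: "nat \<Rightarrow> 'k"
      proof (cases "\<exists>i<n. pmf Q (ys i) = 0")
        case True
        then have "(\<Prod>i<n. pmf Q (ys i)) = 0" by (auto simp: prod_zero_iff)
        then show ?thesis by simp
      next
        case False
        then have "(\<Sum>i<n. z (ys i)) = 0" by (auto intro!: sum.neutral zq)
        then show ?thesis by simp
      qed
      show ?thesis by (simp only: abs_sum_expect term0 sum.neutral_const)
    qed
    show ?thesis using True by (simp add: zero s2_def[symmetric])
  next
    case False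
    then have s2_pos: "s2 > 0" using s2_nn by simp
    define \<sigma> where "\<sigma> = sqrt s2"
    have \<sigma>_pos: "\<sigma> > 0" using s2_pos by (simp add: \<sigma>_def)
    have \<sigma>2: "\<sigma>\<^sup>2 = s2" using s2_nn by (simp add: \<sigma>_def)
    define X where "X i \<omega> = z (\<omega> i)" for i and \<omega> :: "nat \<Rightarrow> 'k"
    have Xm[measurable]: "X i \<in> borel_measurable ?M" for i
      unfolding X_def by measurable
    have indep: "P.indep_vars (\<lambda>i. borel) X UNIV"
      using P.indep_vars_compose2[OF coord_indep[of Q], where Y = "\<lambda>_. z" and N = "\<lambda>_. borel"]
      unfolding X_def by simp
    have mean: "P.expectation (X i) = 0" for i
      using single_expect(2)[where Q=Q and f=z and i=i] mean0 unfolding X_def by simp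
    have int2: "integrable ?M (\<lambda>x. (X i x)\<^sup>2)" for i
      using single_expect(1)[where Q=Q and f="\<lambda>a. (z a)\<^sup>2" and i=i] unfolding X_def by simp
    have var: "P.variance (X i) = \<sigma>\<^sup>2" for i
      using single_expect(2)[where Q=Q and f="\<lambda>a. (z a)\<^sup>2" and i=i] mean[of i]
      unfolding X_def \<sigma>2 s2_def by simp
    have dist: "distr ?M borel (X i) = distr (measure_pmf Q) borel z" for i
    proof -
      have "distr ?M borel (X i) = distr ?M borel (z \<circ> (\<lambda>\<omega>. \<omega> i))"
        unfolding X_def by (simp add: comp_def)
      also have "\<dots> = distr (distr ?M (measure_pmf Q) (\<lambda>\<omega>. \<omega> i)) borel z"
        by (subst distr_distr) (auto intro: measurable_component_singleton)
      also have "\<dots> = distr (measure_pmf Q) borel z"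
        by (subst P.PiM_component) auto
      finally show ?thesis .
    qed
    define \<mu> where "\<mu> n = distr ?M borel (\<lambda>x. (\<Sum>i<n. X i x) / sqrt (real n * \<sigma>\<^sup>2))" for n
    have wc: "weak_conv_m \<mu> std_normal_distribution"
      unfolding \<mu>_def
      by (rule P.central_limit_theorem_zero_mean[OF indep mean \<sigma>_pos int2 var dist])
    have rd: "real_distribution (\<mu> n)" for n
      unfolding \<mu>_def by (intro P.real_distribution_distr) measurable
    have Sint: "integrable ?M (\<lambda>x. (\<Sum>i<n. X i x)\<^sup>2)" for n
      using second_moment(1)[OF mean0, of n] unfolding X_def .
    have Sval: "(\<integral>x. (\<Sum>i<n. X i x)\<^sup>2 \<partial>?M) = real n * s2" for n
      using second_moment(2)[OF mean0, of n] unfolding X_def s2_def .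
    have sqeq: "((\<Sum>i<n. X i x) / sqrt (real n * \<sigma>\<^sup>2))\<^sup>2 = (\<Sum>i<n. X i x)\<^sup>2 / (real n * s2)" for n x
      using s2_nn by (simp add: power_divide \<sigma>2)
    have int2mu: "integrable (\<mu> n) (\<lambda>x. x\<^sup>2)" for n
      unfolding \<mu>_def
      by (subst integrable_distr_eq) (auto simp: sqeq intro!: Sint)
    have bnd2: "(\<integral>x. x\<^sup>2 \<partial>\<mu> n) \<le> 1" for n
    proof -
      have "(\<integral>x. x\<^sup>2 \<partial>\<mu> n) = (\<integral>x. (\<Sum>i<n. X i x)\<^sup>2 / (real n * s2) \<partial>?M)"
        unfolding \<mu>_def by (subst integral_distr) (auto simp: sqeq)
      also have "\<dots> = real n * s2 / (real n * s2)"
        by (simp add: Sval)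
      also have "\<dots> \<le> 1" by simp
      finally show ?thesis .
    qed
    have lim: "(\<lambda>n. \<integral>x. \<bar>x\<bar> \<partial>\<mu> n) \<longlonglongrightarrow> sqrt (2 / pi)"
      by (rule weak_conv_abs_moment[OF rd wc int2mu bnd2])
    have abseq: "(\<integral>\<omega>. \<bar>\<Sum>i<n. z (\<omega> i)\<bar> \<partial>?M) / sqrt (real n) = \<sigma> * (\<integral>x. \<bar>x\<bar> \<partial>\<mu> n)" for n
    proof -
      have "(\<integral>x. \<bar>x\<bar> \<partial>\<mu> n) = (\<integral>x. \<bar>\<Sum>i<n. X i x\<bar> / (sqrt (real n) * \<sigma>) \<partial>?M)"
        unfolding \<mu>_def using \<sigma>_pos
        by (subst integral_distr) (auto simp: real_sqrt_mult abs_divide)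
      also have "\<dots> = (\<integral>\<omega>. \<bar>\<Sum>i<n. z (\<omega> i)\<bar> \<partial>?M) / (sqrt (real n) * \<sigma>)"
        unfolding X_def by simp
      finally show ?thesis using \<sigma>_pos by (simp add: field_simps)
    qed
    have "(\<lambda>n. \<sigma> * (\<integral>x. \<bar>x\<bar> \<partial>\<mu> n)) \<longlonglongrightarrow> \<sigma> * sqrt (2 / pi)"
      by (intro tendsto_mult_left lim)
    then show ?thesis
      unfolding abseq s2_def[symmetric] \<sigma>_def by (simp add: mult.commute)
  qed
qed

lemma inv_props:
  fixes W :: "real ^ 'k ^ 'k::finite"
  assumes "invertible W"
  shows "W ** matrix_inv W = mat 1" "matrix_inv W ** W = mat 1"
proof -
  have "\<exists>A'. W ** A' = mat 1 \<and> A' ** W = mat 1" using assms unfolding invertible_def by blast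
  then have "W ** matrix_inv W = mat 1 \<and> matrix_inv W ** W = mat 1"
    unfolding matrix_inv_def by (rule someI_ex)
  then show "W ** matrix_inv W = mat 1" "matrix_inv W ** W = mat 1" by auto
qed

lemma inv_row_sum:
  fixes W :: "real ^ 'k ^ 'k::finite"
  assumes "invertible W" "row_stochastic W"
  shows "(\<Sum>k\<in>UNIV. matrix_inv W $ l $ k) = 1"
proof -
  let ?one = "(\<chi> i. 1) :: real ^ 'k"
  have W1: "W *v ?one = ?one"
    using assms(2) unfolding row_stochastic_def by (simp add: matrix_vector_mult_def vec_eq_iff)
  have "matrix_inv W *v ?one = matrix_inv W *v (W *v ?one)" by (simp add: W1)
  also have "\<dots> = ?one" by (simp add: matrix_vector_mul_assoc inv_props(2)[OF assms(1)])
  finally have "(matrix_inv W *v ?one) $ l = 1" by simp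
  then show ?thesis by (simp add: matrix_vector_mult_def)
qed

lemma q_mean:
  fixes W :: "real ^ 'k ^ 'k::finite" and p :: "real ^ 'k"
  assumes "invertible W"
  shows "(\<Sum>l\<in>UNIV. (p v* W) $ l * matrix_inv W $ l $ k) = p $ k"
proof -
  have "(p v* W) v* matrix_inv W = p"
    by (simp add: vector_matrix_mul_assoc inv_props(1)[OF assms])
  then have "((p v* W) v* matrix_inv W) $ k = p $ k" by simp
  then show ?thesis by (simp add: vector_matrix_mult_def)
qed

lemma emp_dist_card:
  fixes n :: nat and ys :: "nat \<Rightarrow> 'k"
  shows "real (card {i. i < n \<and> ys i = l}) = (\<Sum>i<n. if ys i = l then 1 else 0)"
proof -
  have "{i. i < n \<and> ys i = l} = {i \<in> {..<n}. ys i = l}" by auto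
  then have "real (card {i. i < n \<and> ys i = l}) = (\<Sum>i\<in>{i \<in> {..<n}. ys i = l}. 1)" by simp
  also have "\<dots> = (\<Sum>i<n. if ys i = l then 1 else 0)"
    by (rule sum.inter_filter) simp
  finally show ?thesis .
qed

lemma emp_dist_mult:
  fixes B :: "real ^ 'k ^ 'k::finite" and ys :: "nat \<Rightarrow> 'k"
  shows "(emp_dist n ys v* B) $ k = (\<Sum>i<n. B $ (ys i) $ k) / real n"
proof -
  have "(emp_dist n ys v* B) $ k = (\<Sum>l\<in>UNIV. (\<Sum>i<n. if ys i = l then 1 else 0) / real n * B $ l $ k)"
    by (simp add: vector_matrix_mult_def emp_dist_def emp_dist_card)
  also have "\<dots> = (\<Sum>l\<in>UNIV. (\<Sum>i<n. (if ys i = l then B $ l $ k else 0)) / real n)"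
  proof (intro sum.cong refl)
    fix l
    have "(\<Sum>i<n. if ys i = l then 1 else 0) * B $ l $ k = (\<Sum>i<n. (if ys i = l then 1 else 0) * B $ l $ k)"
      by (rule sum_distrib_right)
    also have "\<dots> = (\<Sum>i<n. (if ys i = l then B $ l $ k else 0))"
      by (intro sum.cong refl) simp
    finally show "(\<Sum>i<n. if ys i = l then 1 else 0) / real n * B $ l $ k = (\<Sum>i<n. (if ys i = l then B $ l $ k else 0)) / real n"
      by (metis times_divide_eq_left)
  qed
  also have "\<dots> = (\<Sum>l\<in>UNIV. \<Sum>i<n. (if ys i = l then B $ l $ k else 0)) / real n"
    by (simp add: sum_divide_distrib)
  also have "\<dots> = (\<Sum>i<n. \<Sum>l\<in>UNIV. (if ys i = l then B $ l $ k else 0)) / real n"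
    by (subst sum.swap) simp
  also have "\<dots> = (\<Sum>i<n. B $ (ys i) $ k) / real n"
    by simp
  finally show ?thesis .
qed

lemma emp_dist_sum1:
  fixes W :: "real ^ 'k ^ 'k::finite"
  assumes "invertible W" "row_stochastic W" "n > 0"
  shows "(\<Sum>k\<in>UNIV. (emp_dist n ys v* matrix_inv W) $ k) = 1"
proof -
  have "(\<Sum>k\<in>UNIV. (emp_dist n ys v* matrix_inv W) $ k) = (\<Sum>k\<in>UNIV. \<Sum>i<n. matrix_inv W $ (ys i) $ k) / real n"
    by (simp add: emp_dist_mult sum_divide_distrib)
  also have "\<dots> = (\<Sum>i<n. \<Sum>k\<in>UNIV. matrix_inv W $ (ys i) $ k) / real n"
    by (subst sum.swap) simp
  also have "\<dots> = 1" using assms by (simp add: inv_row_sum)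
  finally show ?thesis .
qed

lemma proj_bound:
  fixes p v :: "real ^ 'k::finite" and Proj :: "real ^ 'k \<Rightarrow> real ^ 'k" and m :: real
  assumes ppos: "\<forall>k. p $ k > 0" and psum: "(\<Sum>k\<in>UNIV. p $ k) = 1"
    and m: "m > 0" "\<forall>k. m \<le> p $ k"
    and P1: "\<forall>v. (\<Sum>k\<in>UNIV. v $ k) = 1 \<longrightarrow> Proj v \<in> prob_simplex"
    and P2: "\<forall>v\<in>prob_simplex. Proj v = v"
    and vs: "(\<Sum>k\<in>UNIV. v $ k) = 1"
  shows "\<bar>l1_dist (Proj v) p - (\<Sum>k\<in>UNIV. \<bar>v $ k - p $ k\<bar>)\<bar>
           \<le> (2 / m\<^sup>2 + real CARD('k) / m) * (\<Sum>k\<in>UNIV. (v $ k - p $ k)\<^sup>2)"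
proof (cases "v \<in> prob_simplex")
  case True
  then show ?thesis using P2 m
    by (auto simp: l1_dist_def intro!: mult_nonneg_nonneg sum_nonneg add_nonneg_nonneg)
next
  case False
  define s where "s = (\<Sum>k\<in>UNIV. (v $ k - p $ k)\<^sup>2)"
  obtain k0 where k0: "v $ k0 < 0"
    using False vs unfolding prob_simplex_def by (auto simp: not_le)
  have "m\<^sup>2 \<le> (v $ k0 - p $ k0)\<^sup>2"
  proof -
    have "m \<le> \<bar>v $ k0 - p $ k0\<bar>" using k0 m(2) ppos by (smt (verit))
    then show ?thesis using m(1) by (metis abs_ge_zero abs_of_pos power2_abs power_mono)
  qed
  also have "\<dots> \<le> s" unfolding s_def by (rule member_le_sum) auto
  finally have ms: "m\<^sup>2 \<le> s" .
  have dk: "\<bar>v $ k - p $ k\<bar> \<le> s / m" for k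
  proof -
    have sq: "(v $ k - p $ k)\<^sup>2 \<le> s" unfolding s_def by (rule member_le_sum) auto
    have "2 * (\<bar>v $ k - p $ k\<bar> * m) \<le> (v $ k - p $ k)\<^sup>2 + m\<^sup>2"
      using sum_squares_bound[of "\<bar>v $ k - p $ k\<bar>" m] by (simp add: power2_abs)
    then have "\<bar>v $ k - p $ k\<bar> * m \<le> s" using sq ms by linarith
    then show ?thesis using m(1) by (simp add: field_simps)
  qed
  have L: "(\<Sum>k\<in>UNIV. \<bar>v $ k - p $ k\<bar>) \<le> real CARD('k) * (s / m)"
    using sum_mono[of UNIV "\<lambda>k. \<bar>v $ k - p $ k\<bar>" "\<lambda>_. s / m", OF dk] by simp
  have Pv: "Proj v \<in> prob_simplex" using P1 vs by blast
  have l1P: "0 \<le> l1_dist (Proj v) p" "l1_dist (Proj v) p \<le> 2"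
  proof -
    show "0 \<le> l1_dist (Proj v) p" unfolding l1_dist_def by (auto intro: sum_nonneg)
    have nn: "0 \<le> Proj v $ k" for k using Pv unfolding prob_simplex_def by auto
    have "l1_dist (Proj v) p \<le> (\<Sum>k\<in>UNIV. Proj v $ k + p $ k)"
      unfolding l1_dist_def
      by (intro sum_mono) (smt (verit) nn ppos)
    also have "\<dots> = 2" using Pv psum unfolding prob_simplex_def by (simp add: sum.distrib)
    finally show "l1_dist (Proj v) p \<le> 2" .
  qed
  have two: "2 \<le> 2 / m\<^sup>2 * s" using ms m(1) by (simp add: field_simps)
  have L0: "0 \<le> (\<Sum>k\<in>UNIV. \<bar>v $ k - p $ k\<bar>)" by (auto intro: sum_nonneg)
  have "\<bar>l1_dist (Proj v) p - (\<Sum>k\<in>UNIV. \<bar>v $ k - p $ k\<bar>)\<bar> \<le> 2 + (\<Sum>k\<in>UNIV. \<bar>v $ k - p $ k\<bar>)"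
    using l1P L0 by linarith
  also have "\<dots> \<le> 2 / m\<^sup>2 * s + real CARD('k) * (s / m)" using two L by linarith
  also have "\<dots> = (2 / m\<^sup>2 + real CARD('k) / m) * s" by (simp add: algebra_simps)
  finally show ?thesis unfolding s_def .
qed

lemma abs_sum_int:
  fixes Q :: "'k::finite pmf" and z :: "'k \<Rightarrow> real"
  shows "integrable (PiM UNIV (\<lambda>_::nat. measure_pmf Q)) (\<lambda>\<omega>. \<bar>\<Sum>i<n. z (\<omega> i)\<bar>)"
proof -
  have eq: "(\<lambda>\<omega>. (\<lambda>ys. \<bar>\<Sum>i<n. z (ys i)\<bar>) (restrict \<omega> {..<n})) = (\<lambda>\<omega>::nat \<Rightarrow> 'k. \<bar>\<Sum>i<n. z (\<omega> i)\<bar>)"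
    by (auto intro!: sum.cong ext)
  show ?thesis
    using conv_integral(1)[OF finite_lessThan[of n], where Q=Q and g="\<lambda>ys. \<bar>\<Sum>i<n. z (ys i)\<bar>"] unfolding eq .
qed

lemma expected_eq:
  fixes p :: "real ^ 'k::finite" and W :: "real ^ 'k ^ 'k" and Q :: "'k pmf"
  assumes pmfQ: "\<And>l. pmf Q l = (p v* W) $ l"
  shows "expected_l1_error p W Proj n =
           (\<integral>\<omega>. l1_dist (Proj (emp_dist n \<omega> v* matrix_inv W)) p \<partial>(PiM UNIV (\<lambda>_::nat. measure_pmf Q)))"
    and "integrable (PiM UNIV (\<lambda>_::nat. measure_pmf Q)) (\<lambda>\<omega>. l1_dist (Proj (emp_dist n \<omega> v* matrix_inv W)) p)"
proof -
  define h where "h ys = l1_dist (Proj (emp_dist n ys v* matrix_inv W)) p" for ys :: "nat \<Rightarrow> 'k"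
  have ed: "emp_dist n (restrict \<omega> {..<n}) = emp_dist n \<omega>" for \<omega> :: "nat \<Rightarrow> 'k"
  proof -
    have "{i. i < n \<and> restrict \<omega> {..<n} i = l} = {i. i < n \<and> \<omega> i = l}" for l by auto
    then show ?thesis unfolding emp_dist_def by simp
  qed
  have eq: "(\<lambda>\<omega>. h (restrict \<omega> {..<n})) = (\<lambda>\<omega>. l1_dist (Proj (emp_dist n \<omega> v* matrix_inv W)) p)"
    unfolding h_def ed ..
  show "integrable (PiM UNIV (\<lambda>_::nat. measure_pmf Q)) (\<lambda>\<omega>. l1_dist (Proj (emp_dist n \<omega> v* matrix_inv W)) p)"
    using conv_integral(1)[OF finite_lessThan[of n], where Q=Q and g=h] unfolding eq .
  have inner: "(\<Sum>xs\<in>PiE {..<n} (\<lambda>_. UNIV). \<Prod>i<n. p $ (xs i) * W $ (xs i) $ (ys i)) = (\<Prod>i<n. pmf Q (ys i))" for ys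
  proof -
    have "(\<Sum>xs\<in>PiE {..<n} (\<lambda>_. UNIV). \<Prod>i<n. p $ (xs i) * W $ (xs i) $ (ys i)) =
          (\<Prod>i<n. \<Sum>x\<in>UNIV. p $ x * W $ x $ (ys i))"
      by (subst prod_sum_PiE) auto
    also have "\<dots> = (\<Prod>i<n. pmf Q (ys i))"
      by (simp add: pmfQ vector_matrix_mult_def)
    finally show ?thesis .
  qed
  have "expected_l1_error p W Proj n =
      (\<Sum>ys\<in>PiE {..<n} (\<lambda>_. UNIV). \<Sum>xs\<in>PiE {..<n} (\<lambda>_. UNIV). (\<Prod>i<n. p $ (xs i) * W $ (xs i) $ (ys i)) * h ys)"
    unfolding expected_l1_error_def h_def by (rule sum.swap)
  also have "\<dots> = (\<Sum>ys\<in>PiE {..<n} (\<lambda>_. UNIV). (\<Prod>i<n. pmf Q (ys i)) * h ys)"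
    by (simp add: sum_distrib_right[symmetric] inner)
  also have "\<dots> = (\<integral>\<omega>. h (restrict \<omega> {..<n}) \<partial>(PiM UNIV (\<lambda>_::nat. measure_pmf Q)))"
    by (rule conv_integral(2)[OF finite_lessThan[of n], symmetric])
  finally show "expected_l1_error p W Proj n =
           (\<integral>\<omega>. l1_dist (Proj (emp_dist n \<omega> v* matrix_inv W)) p \<partial>(PiM UNIV (\<lambda>_::nat. measure_pmf Q)))"
    unfolding eq .
qed

theorem theorem4:
  fixes p :: "real ^ 'k::finite"
    and W :: "real ^ 'k ^ 'k"
    and Proj :: "real ^ 'k \<Rightarrow> real ^ 'k"
  assumes "CARD('k) \<ge> 2"
    and "p \<in> prob_simplex" and "\<forall>k. p $ k > 0"
    and "row_stochastic W" and "invertible W"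
    and "\<forall>v. (\<Sum>k\<in>UNIV. v $ k) = 1 \<longrightarrow> Proj v \<in> prob_simplex"
    and "\<forall>v\<in>prob_simplex. Proj v = v"
  shows "(\<lambda>n. expected_l1_error p W Proj n
             - sqrt (2 / (pi * real n)) * (\<Sum>k\<in>UNIV. sqrt (nu p W 2 k - (nu p W 1 k)\<^sup>2)))
         \<in> o(\<lambda>n. 1 / sqrt (real n))"
proof -
  note psimp = assms(2) and ppos = assms(3) and rs = assms(4) and inv = assms(5)
    and P1 = assms(6) and P2 = assms(7)
  define Wi where "Wi = matrix_inv W"
  define q where "q = p v* W"
  have psum: "(\<Sum>k\<in>UNIV. p $ k) = 1" using psimp unfolding prob_simplex_def by auto
  have q_nn: "0 \<le> q $ l" for l
  proof -
    have t: "0 \<le> p $ i * W $ i $ l" for i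
      using ppos rs unfolding row_stochastic_def by (simp add: less_imp_le)
    show ?thesis unfolding q_def vector_matrix_mult_def by (simp add: sum_nonneg t)
  qed
  have q_sum: "(\<Sum>l\<in>UNIV. q $ l) = 1"
  proof -
    have "(\<Sum>l\<in>UNIV. q $ l) = (\<Sum>l\<in>UNIV. \<Sum>i\<in>UNIV. p $ i * W $ i $ l)"
      unfolding q_def vector_matrix_mult_def by simp
    also have "\<dots> = (\<Sum>i\<in>UNIV. p $ i * (\<Sum>l\<in>UNIV. W $ i $ l))"
      by (subst sum.swap) (simp add: sum_distrib_left)
    also have "\<dots> = 1" using rs psum unfolding row_stochastic_def by simp
    finally show ?thesis .
  qed
  define Q where "Q = embed_pmf (\<lambda>l. q $ l)"
  have pmfQ: "pmf Q l = q $ l" for l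
  proof -
    have "(\<integral>\<^sup>+x. ennreal (q $ x) \<partial>count_space UNIV) = 1"
      by (simp add: nn_integral_count_space_finite q_nn q_sum)
    then show ?thesis unfolding Q_def by (intro pmf_embed_pmf) (auto simp: q_nn)
  qed
  define z where "z k l = Wi $ l $ k - p $ k" for k l
  have qmean: "(\<Sum>l\<in>UNIV. q $ l * Wi $ l $ k) = p $ k" for k
    unfolding q_def Wi_def by (rule q_mean[OF inv])
  have mean0: "(\<Sum>l\<in>UNIV. pmf Q l * z k l) = 0" for k
    by (simp add: pmfQ z_def right_diff_distrib sum_subtractf qmean sum_distrib_right[symmetric] q_sum)
  define s2 where "s2 k = (\<Sum>l\<in>UNIV. pmf Q l * (z k l)\<^sup>2)" for k
  have nu_eq: "nu p W 2 k - (nu p W 1 k)\<^sup>2 = s2 k" for k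
  proof -
    have n1: "nu p W 1 k = p $ k"
      unfolding nu_def hadamard_pow_def using qmean[of k]
      by (simp add: vector_matrix_mult_def q_def Wi_def mult.commute)
    have n2: "nu p W 2 k = (\<Sum>l\<in>UNIV. q $ l * (Wi $ l $ k)\<^sup>2)"
      unfolding nu_def hadamard_pow_def by (simp add: vector_matrix_mult_def q_def Wi_def)
    have "s2 k = (\<Sum>l\<in>UNIV. q $ l * (Wi $ l $ k)\<^sup>2 - 2 * p $ k * (q $ l * Wi $ l $ k) + (p $ k)\<^sup>2 * q $ l)"
      unfolding s2_def z_def pmfQ by (intro sum.cong refl) (simp add: power2_eq_square algebra_simps)
    also have "\<dots> = (\<Sum>l\<in>UNIV. q $ l * (Wi $ l $ k)\<^sup>2) - 2 * p $ k * (\<Sum>l\<in>UNIV. q $ l * Wi $ l $ k) + (p $ k)\<^sup>2 * (\<Sum>l\<in>UNIV. q $ l)"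
      by (simp add: sum.distrib sum_subtractf sum_distrib_left)
    also have "\<dots> = nu p W 2 k - (nu p W 1 k)\<^sup>2"
      unfolding n1 n2 qmean q_sum by (simp add: power2_eq_square)
    finally show ?thesis by simp
  qed
  let ?M = "PiM UNIV (\<lambda>_::nat. measure_pmf Q)"
  interpret P: product_prob_space "\<lambda>_::nat. measure_pmf Q" UNIV
    by (rule product_prob_spaceI) (simp add: measure_pmf.prob_space_axioms)
  define H where "H n \<omega> = l1_dist (Proj (emp_dist n \<omega> v* Wi)) p" for n and \<omega> :: "nat \<Rightarrow> 'k"
  have pmfQ': "pmf Q l = (p v* W) $ l" for l by (simp add: pmfQ q_def)
  have exp_eq: "expected_l1_error p W Proj n = (\<integral>\<omega>. H n \<omega> \<partial>?M)" for n
    unfolding H_def Wi_def by (rule expected_eq(1)[OF pmfQ'])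
  have H_int: "integrable ?M (H n)" for n
    unfolding H_def Wi_def using expected_eq(2)[OF pmfQ'] .
  define A where "A k n = (\<integral>\<omega>. \<bar>\<Sum>i<n. z k (\<omega> i)\<bar> \<partial>?M)" for k n
  define m where "m = Min (range (\<lambda>k. p $ k))"
  have m_pos: "m > 0" unfolding m_def using ppos by (subst Min_gr_iff) auto
  have m_le: "\<forall>k. m \<le> p $ k" unfolding m_def by (auto intro: Min_le)
  define C where "C = 2 / m\<^sup>2 + real CARD('k) / m"
  have bound: "\<bar>expected_l1_error p W Proj n - (\<Sum>k\<in>UNIV. A k n) / real n\<bar> \<le> C * (\<Sum>k\<in>UNIV. s2 k) / real n"
    if n: "n > 0" for n
  proof -
    define S where "S k \<omega> = (\<Sum>i<n. z k (\<omega> i))" for k and \<omega> :: "nat \<Rightarrow> 'k"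
    have vdiff: "(emp_dist n \<omega> v* Wi) $ k - p $ k = S k \<omega> / real n" for k \<omega>
    proof -
      have "(emp_dist n \<omega> v* Wi) $ k - p $ k = (\<Sum>i<n. Wi $ (\<omega> i) $ k) / real n - (\<Sum>i<n. p $ k) / real n"
        using n by (simp add: emp_dist_mult)
      also have "\<dots> = S k \<omega> / real n"
        unfolding S_def z_def by (simp add: sum_subtractf diff_divide_distrib)
      finally show ?thesis .
    qed
    have pw: "\<bar>H n \<omega> - (\<Sum>k\<in>UNIV. \<bar>S k \<omega>\<bar>) / real n\<bar> \<le> C * (\<Sum>k\<in>UNIV. (S k \<omega>)\<^sup>2) / (real n)\<^sup>2" for \<omega>
    proof -
      have vs: "(\<Sum>k\<in>UNIV. (emp_dist n \<omega> v* Wi) $ k) = 1"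
        unfolding Wi_def by (rule emp_dist_sum1[OF inv rs n])
      have "\<bar>H n \<omega> - (\<Sum>k\<in>UNIV. \<bar>(emp_dist n \<omega> v* Wi) $ k - p $ k\<bar>)\<bar>
             \<le> C * (\<Sum>k\<in>UNIV. ((emp_dist n \<omega> v* Wi) $ k - p $ k)\<^sup>2)"
        unfolding H_def C_def by (rule proj_bound[OF ppos psum m_pos m_le P1 P2 vs])
      moreover have "(\<Sum>k\<in>UNIV. \<bar>(emp_dist n \<omega> v* Wi) $ k - p $ k\<bar>) = (\<Sum>k\<in>UNIV. \<bar>S k \<omega>\<bar>) / real n"
        using n by (simp add: vdiff sum_divide_distrib)
      moreover have "(\<Sum>k\<in>UNIV. ((emp_dist n \<omega> v* Wi) $ k - p $ k)\<^sup>2) = (\<Sum>k\<in>UNIV. (S k \<omega>)\<^sup>2) / (real n)\<^sup>2"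
        by (simp add: vdiff sum_divide_distrib power_divide)
      ultimately show ?thesis by simp
    qed
    have Sabs_int: "integrable ?M (\<lambda>\<omega>. \<bar>S k \<omega>\<bar>)" for k
      unfolding S_def by (rule abs_sum_int)
    have S2_int: "integrable ?M (\<lambda>\<omega>. (S k \<omega>)\<^sup>2)" for k
      unfolding S_def by (rule second_moment(1)[OF mean0])
    have S2_val: "(\<integral>\<omega>. (S k \<omega>)\<^sup>2 \<partial>?M) = real n * s2 k" for k
      unfolding S_def s2_def by (rule second_moment(2)[OF mean0])
    have Aeq: "A k n = (\<integral>\<omega>. \<bar>S k \<omega>\<bar> \<partial>?M)" for k unfolding A_def S_def ..
    have int1: "integrable ?M (\<lambda>\<omega>. H n \<omega> - (\<Sum>k\<in>UNIV. \<bar>S k \<omega>\<bar>) / real n)"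
      by (intro Bochner_Integration.integrable_diff H_int integrable_divide Bochner_Integration.integrable_sum Sabs_int)
    have int2: "integrable ?M (\<lambda>\<omega>. C * (\<Sum>k\<in>UNIV. (S k \<omega>)\<^sup>2) / (real n)\<^sup>2)"
      by (intro integrable_divide integrable_mult_right Bochner_Integration.integrable_sum S2_int)
    have "expected_l1_error p W Proj n - (\<Sum>k\<in>UNIV. A k n) / real n =
          (\<integral>\<omega>. H n \<omega> - (\<Sum>k\<in>UNIV. \<bar>S k \<omega>\<bar>) / real n \<partial>?M)"
      unfolding exp_eq Aeq
      by (subst Bochner_Integration.integral_diff[OF H_int])
         (auto intro!: integrable_divide Bochner_Integration.integrable_sum Sabs_int
               simp: Bochner_Integration.integral_sum[OF Sabs_int])
    also have "\<bar>\<dots>\<bar> \<le> (\<integral>\<omega>. C * (\<Sum>k\<in>UNIV. (S k \<omega>)\<^sup>2) / (real n)\<^sup>2 \<partial>?M)"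
    proof -
      have a: "(\<integral>\<omega>. H n \<omega> - (\<Sum>k\<in>UNIV. \<bar>S k \<omega>\<bar>) / real n \<partial>?M) \<le> (\<integral>\<omega>. C * (\<Sum>k\<in>UNIV. (S k \<omega>)\<^sup>2) / (real n)\<^sup>2 \<partial>?M)"
        by (rule integral_mono[OF int1 int2]) (use pw in \<open>auto simp: abs_le_iff\<close>)
      have "(\<integral>\<omega>. - (H n \<omega> - (\<Sum>k\<in>UNIV. \<bar>S k \<omega>\<bar>) / real n) \<partial>?M) \<le> (\<integral>\<omega>. C * (\<Sum>k\<in>UNIV. (S k \<omega>)\<^sup>2) / (real n)\<^sup>2 \<partial>?M)"
        by (rule integral_mono[OF integrable_minus[OF int1] int2]) (use pw in \<open>auto simp: abs_le_iff\<close>)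
      then have b: "- (\<integral>\<omega>. H n \<omega> - (\<Sum>k\<in>UNIV. \<bar>S k \<omega>\<bar>) / real n \<partial>?M) \<le> (\<integral>\<omega>. C * (\<Sum>k\<in>UNIV. (S k \<omega>)\<^sup>2) / (real n)\<^sup>2 \<partial>?M)"
        by (simp only: Bochner_Integration.integral_minus)
      show ?thesis using a b by (simp add: abs_le_iff)
    qed
    also have "\<dots> = C * (\<Sum>k\<in>UNIV. real n * s2 k) / (real n)\<^sup>2"
      by (simp add: Bochner_Integration.integral_sum[OF S2_int] S2_val)
    also have "\<dots> = C * (\<Sum>k\<in>UNIV. s2 k) / real n"
      using n by (simp add: sum_distrib_left[symmetric] power2_eq_square)
    finally show ?thesis .
  qed
  have clt: "(\<lambda>n. A k n / sqrt (real n)) \<longlonglongrightarrow> sqrt (2 / pi) * sqrt (s2 k)" for k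
    unfolding A_def s2_def by (rule clt_abs[OF mean0])
  define L where "L = (\<Sum>k\<in>UNIV. sqrt (s2 k))"
  define E where "E n = expected_l1_error p W Proj n" for n
  define g1 where "g1 n = sqrt (real n) * (E n - (\<Sum>k\<in>UNIV. A k n) / real n)" for n
  define g2 where "g2 n = (\<Sum>k\<in>UNIV. A k n / sqrt (real n) - sqrt (2 / pi) * sqrt (s2 k))" for n
  have g2_lim: "g2 \<longlonglongrightarrow> 0"
    unfolding g2_def by (intro tendsto_null_sum LIM_zero clt)
  have inv_sqrt: "(\<lambda>n. sqrt (inverse (real n))) \<longlonglongrightarrow> 0"
    using tendsto_real_sqrt[OF lim_inverse_n] by simp
  have g1_bnd: "(\<lambda>n. C * (\<Sum>k\<in>UNIV. s2 k) * sqrt (inverse (real n))) \<longlonglongrightarrow> 0"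
    by (rule tendsto_mult_right_zero[OF inv_sqrt])
  have g1_lim: "g1 \<longlonglongrightarrow> 0"
  proof (rule Lim_null_comparison[OF _ g1_bnd])
    show "\<forall>\<^sub>F n in sequentially. norm (g1 n) \<le> C * (\<Sum>k\<in>UNIV. s2 k) * sqrt (inverse (real n))"
      unfolding eventually_sequentially
    proof (intro exI allI impI)
      fix n :: nat assume "n \<ge> 1"
      then have n: "n > 0" by simp
      have sq: "sqrt (real n) * sqrt (real n) = real n" by simp
      have "norm (g1 n) = sqrt (real n) * \<bar>E n - (\<Sum>k\<in>UNIV. A k n) / real n\<bar>"
        unfolding g1_def by (simp add: abs_mult)
      also have "\<dots> \<le> sqrt (real n) * (C * (\<Sum>k\<in>UNIV. s2 k) / real n)"
        using bound[OF n] unfolding E_def by (intro mult_left_mono) auto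
      also have "\<dots> = C * (\<Sum>k\<in>UNIV. s2 k) * sqrt (inverse (real n))"
      proof -
        have "sqrt (inverse (real n)) = sqrt (real n) / real n"
        proof -
          have "sqrt (real n) > 0" using n by simp
          then show ?thesis unfolding real_sqrt_inverse using sq by (simp add: field_simps)
        qed
        then show ?thesis by simp
      qed
      finally show "norm (g1 n) \<le> C * (\<Sum>k\<in>UNIV. s2 k) * sqrt (inverse (real n))" .
    qed
  qed
  have sumlim: "(\<lambda>n. g1 n + g2 n) \<longlonglongrightarrow> 0"
    using tendsto_add[OF g1_lim g2_lim] by simp
  have eqv: "\<forall>\<^sub>F n in sequentially. g1 n + g2 n =
      (E n - sqrt (2 / (pi * real n)) * L) / (1 / sqrt (real n))"
    unfolding eventually_sequentially
  proof (intro exI allI impI)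
    fix n :: nat assume "n \<ge> 1"
    then have n: "n > 0" by simp
    define s where "s = sqrt (real n)"
    have s: "s > 0" "s * s = real n" using n by (simp_all add: s_def)
    have r: "sqrt (2 / (pi * real n)) = sqrt (2 / pi) / s"
      unfolding s_def by (simp add: real_sqrt_divide real_sqrt_mult)
    have "g1 n + g2 n = s * E n - s * (\<Sum>k\<in>UNIV. A k n) / real n
        + (\<Sum>k\<in>UNIV. A k n) / s - sqrt (2 / pi) * L"
      unfolding g1_def g2_def L_def s_def[symmetric]
      by (simp add: sum_subtractf sum_divide_distrib sum_distrib_left right_diff_distrib)
    also have "s * (\<Sum>k\<in>UNIV. A k n) / real n = (\<Sum>k\<in>UNIV. A k n) / s"
      unfolding s(2)[symmetric] using s(1) by (simp add: field_simps)
    also have "s * E n - (\<Sum>k\<in>UNIV. A k n) / s + (\<Sum>k\<in>UNIV. A k n) / s - sqrt (2 / pi) * L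
        = (E n - sqrt (2 / (pi * real n)) * L) / (1 / s)"
      using s unfolding r by (simp add: field_simps)
    finally show "g1 n + g2 n = (E n - sqrt (2 / (pi * real n)) * L) / (1 / sqrt (real n))"
      unfolding s_def .
  qed
  have lim: "(\<lambda>n. (E n - sqrt (2 / (pi * real n)) * L) / (1 / sqrt (real n))) \<longlonglongrightarrow> 0"
    by (rule Lim_transform_eventually[OF sumlim eqv])
  have ev: "\<forall>\<^sub>F n in sequentially. 1 / sqrt (real n) \<noteq> 0"
    unfolding eventually_sequentially by (intro exI[of _ 1]) auto
  have "(\<lambda>n. E n - sqrt (2 / (pi * real n)) * L) \<in> o(\<lambda>n. 1 / sqrt (real n))"
    by (rule smalloI_tendsto[OF lim ev])
  then show ?thesis unfolding E_def L_def nu_eq .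
qed

end
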